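(* Let $T$ be a balanced eulerian tree and let $T'$ be its balanced conjugate (the eulerian tree obtained from $T$ by re-rooting it at the other free leaf). Then the closure $\sigma(T')$ is the map obtained from the closure $\sigma(T)$ by reversing the orientation of its root edge.
   Context: A plane tree is a planar map (embedding of a finite connected graph in the sphere up to orientation-preserving homeomorphism) with one face; vertices of degree 1 are leaves, others inner vertices. An eulerian tree is a plane tree rooted at a leaf, whose leaves are coloured black or white, such that every inner vertex has even degree, every inner vertex of degree $2i$ is adjacent to exactly $i-1$ white leaves, and the root leaf is black; such a tree has exactly two more black leaves than white leaves. Two eulerian trees are conjugate if one is obtained from the other by changing which black leaf is the root. The word $\omega(T)$ of an eulerian tree $T$ is the word over $\{b,w\}$ obtained by following the border of the tree counterclockwise, ending at the root leaf, writing $b$ for each black leaf and $w$ for each white leaf. Reading $w$ as an opening and $b$ as a closing bracket, a word is correct if in every prefix the number of $w$'s is at least the number of $b$'s; in a correct word each $w$ is matched with a $b$, which induces a matching between leaves. In each conjugacy class there are exactly two rooted trees with $\omega(T)=p_1bp_2b$ where $p_1,p_2$ are correct bracketing words; the corresponding two root leaves are called the free leaves, and a tree is balanced if it is rooted at a free leaf. The closure $\sigma(T)$ of a balanced eulerian tree $T$ is obtained by: (1) going counterclockwise around the tree, merging each white leaf with the black leaf it is matched to in the bracketing word (forming an edge); (2) merging the two free leaves into an edge, and rooting the resulting map on this edge oriented from (the side of) the root leaf. *)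

theory Defs
  imports Main "HOL-Combinatorics.Permutations"
begin

text \<open>Combinatorial maps: a finite set of darts D, a fixed-point-free involution
  \<alpha> (the two darts of an edge), and a permutation \<sigma> (counterclockwise
  rotation of darts around their vertex).\<close>

datatype colour = Black | White

definition orbit_of :: "('a \<Rightarrow> 'a) \<Rightarrow> 'a \<Rightarrow> 'a set" where
  "orbit_of f d = {(f ^^ n) d | n. True}"

definition comb_map :: "'a set \<Rightarrow> ('a \<Rightarrow> 'a) \<Rightarrow> ('a \<Rightarrow> 'a) \<Rightarrow> bool" where
  "comb_map D \<alpha> \<sigma> \<longleftrightarrow> finite D \<and> D \<noteq> {} \<and> \<alpha> permutes D \<and> \<sigma> permutes D
     \<and> (\<forall>d\<in>D. \<alpha> (\<alpha> d) = d \<and> \<alpha> d \<noteq> d)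
     \<and> (\<forall>d\<in>D. \<forall>e\<in>D. (d, e) \<in> ({(x, \<alpha> x) | x. x \<in> D} \<union> {(x, \<sigma> x) | x. x \<in> D})\<^sup>*)"

definition map_vertices :: "'a set \<Rightarrow> ('a \<Rightarrow> 'a) \<Rightarrow> 'a set set" where
  "map_vertices D \<sigma> = {orbit_of \<sigma> d | d. d \<in> D}"

definition map_edges :: "'a set \<Rightarrow> ('a \<Rightarrow> 'a) \<Rightarrow> 'a set set" where
  "map_edges D \<alpha> = {{d, \<alpha> d} | d. d \<in> D}"

definition map_faces :: "'a set \<Rightarrow> ('a \<Rightarrow> 'a) \<Rightarrow> ('a \<Rightarrow> 'a) \<Rightarrow> 'a set set" where
  "map_faces D \<alpha> \<sigma> = {orbit_of (\<sigma> \<circ> \<alpha>) d | d. d \<in> D}"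

definition planar_map :: "'a set \<Rightarrow> ('a \<Rightarrow> 'a) \<Rightarrow> ('a \<Rightarrow> 'a) \<Rightarrow> bool" where
  "planar_map D \<alpha> \<sigma> \<longleftrightarrow> comb_map D \<alpha> \<sigma> \<and>
     int (card (map_vertices D \<sigma>)) - int (card (map_edges D \<alpha>)) + int (card (map_faces D \<alpha> \<sigma>)) = 2"

definition plane_tree :: "'a set \<Rightarrow> ('a \<Rightarrow> 'a) \<Rightarrow> ('a \<Rightarrow> 'a) \<Rightarrow> bool" where
  "plane_tree D \<alpha> \<sigma> \<longleftrightarrow> planar_map D \<alpha> \<sigma> \<and> card (map_faces D \<alpha> \<sigma>) = 1"

text \<open>A leaf (vertex of degree 1) is a single dart d with \<sigma> d = d; the degree
  of the vertex of a dart d is the size of its \<sigma>-orbit. A leaf l is adjacent to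
  the vertex of d iff \<alpha> l lies in that vertex. A tree is represented together
  with its colouring col (only relevant on leaves) and its root leaf r.\<close>
definition eulerian_tree ::
  "'a set \<Rightarrow> ('a \<Rightarrow> 'a) \<Rightarrow> ('a \<Rightarrow> 'a) \<Rightarrow> ('a \<Rightarrow> colour) \<Rightarrow> 'a \<Rightarrow> bool" where
  "eulerian_tree D \<alpha> \<sigma> col r \<longleftrightarrow> plane_tree D \<alpha> \<sigma> \<and> r \<in> D \<and> \<sigma> r = r \<and> col r = Black \<and>
     (\<forall>d\<in>D. \<sigma> d \<noteq> d \<longrightarrow>
        even (card (orbit_of \<sigma> d)) \<and>
        card {l \<in> D. \<sigma> l = l \<and> col l = White \<and> \<alpha> l \<in> orbit_of \<sigma> d}
          = card (orbit_of \<sigma> d) div 2 - 1)"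

text \<open>Leaves in the order met when following the border counterclockwise
  (face permutation \<sigma> \<circ> \<alpha>), starting after the root and ending at the root.\<close>
definition leaf_seq :: "'a set \<Rightarrow> ('a \<Rightarrow> 'a) \<Rightarrow> ('a \<Rightarrow> 'a) \<Rightarrow> 'a \<Rightarrow> 'a list" where
  "leaf_seq D \<alpha> \<sigma> r =
     filter (\<lambda>d. \<sigma> d = d) (map (\<lambda>k. ((\<sigma> \<circ> \<alpha>) ^^ k) r) [1..<Suc (card D)])"

text \<open>The word \<omega>(T); letter b is Black, letter w is White.\<close>
definition tree_word ::
  "'a set \<Rightarrow> ('a \<Rightarrow> 'a) \<Rightarrow> ('a \<Rightarrow> 'a) \<Rightarrow> ('a \<Rightarrow> colour) \<Rightarrow> 'a \<Rightarrow> colour list" where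
  "tree_word D \<alpha> \<sigma> col r = map col (leaf_seq D \<alpha> \<sigma> r)"

text \<open>Correct word: w = opening, b = closing; every prefix has at least as many w as b.\<close>
definition correct_word :: "colour list \<Rightarrow> bool" where
  "correct_word u \<longleftrightarrow>
     (\<forall>k \<le> length u. count_list (take k u) Black \<le> count_list (take k u) White)"

definition balanced_tree ::
  "'a set \<Rightarrow> ('a \<Rightarrow> 'a) \<Rightarrow> ('a \<Rightarrow> 'a) \<Rightarrow> ('a \<Rightarrow> colour) \<Rightarrow> 'a \<Rightarrow> bool" where
  "balanced_tree D \<alpha> \<sigma> col r \<longleftrightarrow> eulerian_tree D \<alpha> \<sigma> col r \<and>
     (\<exists>p1 p2. correct_word p1 \<and> correct_word p2 \<and>
        tree_word D \<alpha> \<sigma> col r = p1 @ [Black] @ p2 @ [Black])"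

definition brackets_matched :: "colour list \<Rightarrow> nat \<Rightarrow> nat \<Rightarrow> bool" where
  "brackets_matched u i j \<longleftrightarrow> i < j \<and> j < length u \<and> u ! i = White \<and> u ! j = Black \<and>
     (let v = take (j - Suc i) (drop (Suc i) u) in
        correct_word v \<and> count_list v White = count_list v Black)"

definition leaves_matched ::
  "'a set \<Rightarrow> ('a \<Rightarrow> 'a) \<Rightarrow> ('a \<Rightarrow> 'a) \<Rightarrow> ('a \<Rightarrow> colour) \<Rightarrow> 'a \<Rightarrow> 'a \<Rightarrow> 'a \<Rightarrow> bool" where
  "leaves_matched D \<alpha> \<sigma> col r a b \<longleftrightarrow>
     (let L = leaf_seq D \<alpha> \<sigma> r in
        \<exists>i j. brackets_matched (map col L) i j \<and> L ! i = a \<and> L ! j = b)"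

text \<open>The leaf a leaf l gets merged with in the closure: its matched leaf, or,
  for a free leaf, the other free leaf (free leaves = roots of balanced rootings).\<close>
definition closure_mate ::
  "'a set \<Rightarrow> ('a \<Rightarrow> 'a) \<Rightarrow> ('a \<Rightarrow> 'a) \<Rightarrow> ('a \<Rightarrow> colour) \<Rightarrow> 'a \<Rightarrow> 'a \<Rightarrow> 'a" where
  "closure_mate D \<alpha> \<sigma> col r l =
     (if \<exists>l'. leaves_matched D \<alpha> \<sigma> col r l l' \<or> leaves_matched D \<alpha> \<sigma> col r l' l
      then (THE l'. leaves_matched D \<alpha> \<sigma> col r l l' \<or> leaves_matched D \<alpha> \<sigma> col r l' l)
      else (THE l'. l' \<noteq> l \<and> balanced_tree D \<alpha> \<sigma> col l'))"

text \<open>Closure as a rooted map (darts, \<alpha>, \<sigma>, root dart). Leaf darts are removed;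
  a dart d whose edge ends at a leaf l = \<alpha> d is joined to the dart \<alpha> l' of the
  leaf l' merged with l. The root dart is the dart of the merged free-leaf edge
  lying on the side of the root leaf r, namely \<alpha> r (its origin is the root vertex).\<close>
definition eul_closure ::
  "'a set \<Rightarrow> ('a \<Rightarrow> 'a) \<Rightarrow> ('a \<Rightarrow> 'a) \<Rightarrow> ('a \<Rightarrow> colour) \<Rightarrow> 'a
     \<Rightarrow> 'a set \<times> ('a \<Rightarrow> 'a) \<times> ('a \<Rightarrow> 'a) \<times> 'a" where
  "eul_closure D \<alpha> \<sigma> col r =
     ({d \<in> D. \<sigma> d \<noteq> d},
      (\<lambda>d. if d \<in> D \<and> \<sigma> d \<noteq> d \<and> \<sigma> (\<alpha> d) = \<alpha> d
           then \<alpha> (closure_mate D \<alpha> \<sigma> col r (\<alpha> d)) else \<alpha> d),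
      \<sigma>,
      \<alpha> r)"

definition reverse_root ::
  "'a set \<times> ('a \<Rightarrow> 'a) \<times> ('a \<Rightarrow> 'a) \<times> 'a \<Rightarrow> 'a set \<times> ('a \<Rightarrow> 'a) \<times> ('a \<Rightarrow> 'a) \<times> 'a" where
  "reverse_root M = (case M of (D, a, s, \<rho>) \<Rightarrow> (D, a, s, a \<rho>))"

end

theory Submission
  imports Defs "HOL-Combinatorics.Orbits"
begin

definition H :: "colour list \<Rightarrow> int" where
  "H v = int (count_list v White) - int (count_list v Black)"

lemma H_simps[simp]: "H [] = 0" "H (xs @ ys) = H xs + H ys"
  "H [Black] = -1" "H [White] = 1" "H (Black # xs) = H xs - 1" "H (White # xs) = H xs + 1"
  by (simp_all add: H_def)

lemma correct_H: "correct_word v \<longleftrightarrow> (\<forall>k \<le> length v. H (take k v) \<ge> 0)"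
  by (auto simp: correct_word_def H_def)

lemma correct_H_whole: "correct_word v \<Longrightarrow> H v \<ge> 0"
  using correct_H[of v] by (metis order_refl take_all)

lemma correct_take: "correct_word v \<Longrightarrow> H (take k v) \<ge> 0"
  unfolding correct_H by (metis nat_le_linear take_all)

lemma dyck_of:
  assumes "correct_word p1" "correct_word p2"
    "H (p1 @ [Black] @ p2 @ [Black]) = -2"
  shows "H p1 = 0" "H p2 = 0"
  using assms correct_H_whole[OF assms(1)] correct_H_whole[OF assms(2)] by auto

lemma prefix_bound:
  assumes "correct_word p1" "correct_word p2" "H p1 = 0" "k < length (p1 @ [Black] @ p2 @ [Black])"
  shows "H (take k (p1 @ [Black] @ p2 @ [Black])) \<ge> -1"
proof (cases "k \<le> length p1")
  case True then show ?thesis using correct_take[OF assms(1), of k] by simp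
next
  case False
  then obtain m where m: "k = length p1 + Suc m" by (metis add_Suc_right less_imp_Suc_add not_le)
  then have "take k (p1 @ [Black] @ p2 @ [Black]) = p1 @ [Black] @ take (k - length p1 - 1) (p2 @ [Black])"
    by simp
  moreover have "take (k - length p1 - 1) (p2 @ [Black]) = take (k - length p1 - 1) p2"
    using assms(4) by simp
  moreover have "H (take (k - length p1 - 1) p2) \<ge> 0"
    using correct_take[OF assms(2)] by blast
  ultimately show ?thesis using assms(3) by simp
qed

lemma rot_pos:
  assumes ab: "a @ b = p1 @ [Black] @ p2 @ [Black]"
    and ba: "b @ a = q1 @ [Black] @ q2 @ [Black]"
    and c: "correct_word p1" "correct_word p2" "correct_word q1" "correct_word q2"
    and h: "H (a @ b) = -2" and ne: "a \<noteq> []" "b \<noteq> []"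
  shows "length a = Suc (length p1)"
proof -
  have "H (p1 @ [Black] @ p2 @ [Black]) = -2" using h unfolding ab .
  then have hp: "H p1 = 0" "H p2 = 0" using dyck_of[OF c(1,2)] by blast+
  have "H (b @ a) = -2" using h by simp
  then have "H (q1 @ [Black] @ q2 @ [Black]) = -2" unfolding ba .
  then have hq: "H q1 = 0" "H q2 = 0" using dyck_of[OF c(3,4)] by blast+
  have PB: "\<And>k. k < length (b @ a) \<Longrightarrow> H (take k (b @ a)) \<ge> -1"
    unfolding ba by (rule prefix_bound[OF c(3,4) hq(1)])
  have Hb: "H b = -2 - H a" using h by simp
  show ?thesis
  proof (rule ccontr)
    assume neq: "length a \<noteq> Suc (length p1)"
    show False
    proof (cases "length a \<le> length p1")
      case True
      have "a = take (length a) (a @ b)" by simp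
      also have "\<dots> = take (length a) p1" using True by (simp add: ab)
      finally have "H a \<ge> 0" using correct_take[OF c(1)] by metis
      moreover have "H b \<ge> -1" using PB[of "length b"] ne by simp
      ultimately show False using Hb by simp
    next
      case False
      then have gt: "length a > Suc (length p1)" using neq by simp
      have la: "length a < length (a @ b)" using ne by simp
      have "a = take (length a) (a @ b)" by simp
      also have "\<dots> = p1 @ [Black] @ take (length a - Suc (length p1)) p2"
      proof -
        have len: "length (a @ b) = length p1 + length p2 + 2" unfolding ab by simp
        define m where "m = length a - Suc (length p1)"
        have m: "length a = length p1 + Suc m" "m \<le> length p2" using gt la len unfolding m_def by linarith+
        have tk: "take (length p1 + Suc m) (p1 @ [Black] @ p2 @ [Black]) = p1 @ [Black] @ take m p2"
          using m(2) by simp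
        have eq: "take (length a) (a @ b) = take (length p1 + Suc m) (p1 @ [Black] @ p2 @ [Black])"
          using m(1) ab by simp
        show ?thesis unfolding m_def[symmetric] using eq tk by simp
      qed
      finally have aeq: "a = p1 @ [Black] @ take (length a - Suc (length p1)) p2" .
      then have "H a = H (p1 @ [Black] @ take (length a - Suc (length p1)) p2)" by (rule arg_cong)
      then have "H a \<ge> -1" using correct_take[OF c(2), of "length a - Suc (length p1)"] hp by simp
      have "take (Suc (length p1)) (p1 @ [Black] @ take (length a - Suc (length p1)) p2) = p1 @ [Black]" by simp
      then have "take (Suc (length p1)) a = p1 @ [Black]" using aeq by metis
      then have "take (length b + Suc (length p1)) (b @ a) = b @ p1 @ [Black]" by simp
      moreover have "length b + Suc (length p1) < length (b @ a)" using gt by simp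
      ultimately have "H (b @ p1 @ [Black]) \<ge> -1" using PB by metis
      then show False using Hb hp \<open>H a \<ge> -1\<close> by simp
    qed
  qed
qed

lemma bm_prefix:
  assumes "j < length x"
  shows "brackets_matched (x @ z) i j \<longleftrightarrow> brackets_matched x i j"
proof -
  have "i < j \<Longrightarrow> take (j - Suc i) (drop (Suc i) (x @ z)) = take (j - Suc i) (drop (Suc i) x)"
    using assms by (simp add: take_append)
  then show ?thesis using assms unfolding brackets_matched_def
    by (auto simp: nth_append Let_def)
qed

lemma bm_shift:
  "brackets_matched (y @ u) (length y + i) (length y + j) \<longleftrightarrow> brackets_matched u i j"
proof -
  have "drop (Suc (length y + i)) (y @ u) = drop (Suc i) u" by simp
  then show ?thesis unfolding brackets_matched_def by (auto simp: nth_append Let_def)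
qed

lemma bm_span:
  assumes c: "correct_word x" and h: "H x = 0" and i: "i < length x" and j: "length x \<le> j"
  shows "\<not> brackets_matched (x @ z) i j"
proof
  assume bm: "brackets_matched (x @ z) i j"
  then have w: "x ! i = White" using i unfolding brackets_matched_def by (simp add: nth_append)
  define v where "v = take (j - Suc i) (drop (Suc i) (x @ z))"
  have cv: "correct_word v" using bm unfolding brackets_matched_def v_def Let_def by blast
  have "take (length x - Suc i) v = drop (Suc i) x" unfolding v_def using i j
    by (simp add: min_def)
  then have h1: "H (drop (Suc i) x) \<ge> 0" using correct_take[OF cv] by metis
  have "x = take i x @ [x ! i] @ drop (Suc i) x" using i by (simp add: id_take_nth_drop)
  then have "H x = H (take i x @ [x ! i] @ drop (Suc i) x)" by (rule arg_cong)
  then have "H x = H (take i x) + 1 + H (drop (Suc i) x)" using w by simp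
  moreover have "H (take i x) \<ge> 0" using correct_take[OF c] by blast
  ultimately show False using h h1 by simp
qed

lemma bm_range: "brackets_matched u i j \<Longrightarrow> i < j \<and> j < length u"
  unfolding brackets_matched_def by simp

lemma bm_split:
  assumes cx: "correct_word x" "H x = 0" and cy: "correct_word y" "H y = 0"
  shows "brackets_matched (x @ [Black] @ y @ [Black]) i j \<longleftrightarrow>
    brackets_matched x i j \<or>
    (\<exists>i' j'. i = Suc (length x) + i' \<and> j = Suc (length x) + j' \<and> brackets_matched y i' j')"
    (is "?L \<longleftrightarrow> ?R")
proof
  assume L: ?L
  show ?R
  proof (cases "i < length x")
    case True
    have "j < length x"
    proof (rule ccontr)
      assume "\<not> j < length x"
      then show False using bm_span[OF cx True, of j "[Black] @ y @ [Black]"] L by simp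
    qed
    then show ?thesis using L bm_prefix by blast
  next
    case False
    have "i \<noteq> length x" using L unfolding brackets_matched_def by (auto simp: nth_append)
    with False have gi: "i > length x" by simp
    define i' where "i' = i - Suc (length x)"
    define j' where "j' = j - Suc (length x)"
    have ij: "i = Suc (length x) + i'" "j = Suc (length x) + j'"
      using gi bm_range[OF L] unfolding i'_def j'_def by auto
    have "brackets_matched ((x @ [Black]) @ (y @ [Black])) (length (x @ [Black]) + i') (length (x @ [Black]) + j')"
      using L ij by simp
    then have L2: "brackets_matched (y @ [Black]) i' j'" by (rule bm_shift[THEN iffD1])
    have "j' < length y"
    proof (rule ccontr)
      assume "\<not> j' < length y"
      moreover have "i' < length y"
        using L2 unfolding brackets_matched_def by (auto simp: nth_append split: if_splits)
      ultimately show False using bm_span[OF cy, of i' j' "[Black]"] L2 by simp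
    qed
    then have "brackets_matched y i' j'" using L2 bm_prefix by blast
    then show ?thesis using ij by blast
  qed
next
  assume R: ?R
  then show ?L
  proof
    assume "brackets_matched x i j"
    then show ?L using bm_prefix bm_range by (metis append.assoc)
  next
    assume "\<exists>i' j'. i = Suc (length x) + i' \<and> j = Suc (length x) + j' \<and> brackets_matched y i' j'"
    then obtain i' j' where ij: "i = Suc (length x) + i'" "j = Suc (length x) + j'" "brackets_matched y i' j'"
      by blast
    then have "brackets_matched (y @ [Black]) i' j'" using bm_prefix bm_range by blast
    then have "brackets_matched ((x @ [Black]) @ (y @ [Black])) (length (x @ [Black]) + i') (length (x @ [Black]) + j')"
      by (rule bm_shift[THEN iffD2])
    then show ?L using ij by simp
  qed
qed


lemma orbit_of_perm: "permutation f \<Longrightarrow> orbit_of f d = orbit f d"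
  by (simp add: orbit_of_def orbit_altdef_permutation)

lemma orb_eq:
  assumes "permutation f" "x \<in> orbit f d" shows "orbit f x = orbit f d"
proof
  show "orbit f x \<subseteq> orbit f d" using orbit_trans[OF _ assms(2)] by (rule subsetI)
  have "d \<in> orbit f x" using orbit_swap[OF permutation_self_in_orbit[OF assms(1)] assms(2)] .
  show "orbit f d \<subseteq> orbit f x" using orbit_trans[OF _ \<open>d \<in> orbit f x\<close>] by (rule subsetI)
qed

locale ptree =
  fixes D :: "'a set" and \<alpha> \<sigma> :: "'a \<Rightarrow> 'a"
  assumes pt: "plane_tree D \<alpha> \<sigma>"
begin

lemma fin: "finite D" and ap: "\<alpha> permutes D" and sp: "\<sigma> permutes D"
  and inv: "\<And>d. d \<in> D \<Longrightarrow> \<alpha> (\<alpha> d) = d" and nfix: "\<And>d. d \<in> D \<Longrightarrow> \<alpha> d \<noteq> d"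
  and faces1: "card (map_faces D \<alpha> \<sigma>) = 1"
  and euler: "int (card (map_vertices D \<sigma>)) - int (card (map_edges D \<alpha>)) + int (card (map_faces D \<alpha> \<sigma>)) = 2"
  using pt unfolding plane_tree_def planar_map_def comb_map_def by auto

definition "\<phi> = \<sigma> \<circ> \<alpha>"

lemma phi_perm: "\<phi> permutes D" unfolding \<phi>_def using permutes_compose[OF ap sp] .

lemma phi_permutation: "permutation \<phi>" using phi_perm fin permutation_permutes by blast
lemma sigma_permutation: "permutation \<sigma>" using sp fin permutation_permutes by blast

lemma alpha_in: "d \<in> D \<Longrightarrow> \<alpha> d \<in> D" using ap by (simp add: permutes_in_image)
lemma sigma_in: "d \<in> D \<Longrightarrow> \<sigma> d \<in> D" using sp by (simp add: permutes_in_image)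
lemma phi_in: "d \<in> D \<Longrightarrow> \<phi> d \<in> D" using phi_perm by (simp add: permutes_in_image)
lemma phi_pow_in: "d \<in> D \<Longrightarrow> (\<phi> ^^ k) d \<in> D" by (induct k) (auto simp: phi_in)

lemma face_orbit:
  assumes "d \<in> D" shows "orbit \<phi> d = D"
proof -
  have F: "map_faces D \<alpha> \<sigma> = {orbit \<phi> e | e. e \<in> D}"
    unfolding map_faces_def \<phi>_def[symmetric] using orbit_of_perm[OF phi_permutation] by simp
  obtain X where X: "map_faces D \<alpha> \<sigma> = {X}" using faces1 by (meson card_1_singletonE)
  have eq: "\<And>e. e \<in> D \<Longrightarrow> orbit \<phi> e = X" using F X by blast
  show ?thesis
  proof
    show "orbit \<phi> d \<subseteq> D" using permutes_orbit_subset[OF phi_perm assms] .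
    show "D \<subseteq> orbit \<phi> d"
    proof
      fix e assume "e \<in> D"
      then have "e \<in> orbit \<phi> e" using permutation_self_in_orbit[OF phi_permutation] by blast
      then show "e \<in> orbit \<phi> d" using eq[OF \<open>e \<in> D\<close>] eq[OF assms] by simp
    qed
  qed
qed

lemma cycle:
  assumes "d \<in> D"
  shows "(\<phi> ^^ card D) d = d" "inj_on (\<lambda>k. (\<phi> ^^ k) d) {0..<card D}"
    "(\<lambda>k. (\<phi> ^^ k) d) ` {0..<card D} = D"
proof -
  have self: "d \<in> orbit \<phi> d" using permutation_self_in_orbit[OF phi_permutation] .
  have im: "orbit \<phi> d = (\<lambda>n. (\<phi> ^^ n) d) ` {0..<funpow_dist1 \<phi> d d}"
    by (rule orbit_conv_funpow_dist1[OF self])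
  have inj: "inj_on (\<lambda>n. (\<phi> ^^ n) d) {0..<funpow_dist1 \<phi> d d}" by (rule inj_on_funpow_dist1[OF self])
  have "card D = funpow_dist1 \<phi> d d"
    using face_orbit[OF assms] im card_image[OF inj] by simp
  then show "(\<phi> ^^ card D) d = d" "inj_on (\<lambda>k. (\<phi> ^^ k) d) {0..<card D}"
    "(\<lambda>k. (\<phi> ^^ k) d) ` {0..<card D} = D"
    using funpow_dist1_prop[OF self] inj im face_orbit[OF assms] by auto
qed

lemma period:
  assumes "d \<in> D" shows "(\<phi> ^^ (k + card D)) d = (\<phi> ^^ k) d"
  using cycle(1)[OF assms] by (simp add: funpow_add)

definition "seqs r = map (\<lambda>k. (\<phi> ^^ k) r) [1..<Suc (card D)]"

lemma leaf_seq_eq: "leaf_seq D \<alpha> \<sigma> r = filter (\<lambda>d. \<sigma> d = d) (seqs r)"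
  unfolding leaf_seq_def seqs_def \<phi>_def by simp

lemma cardpos: "r \<in> D \<Longrightarrow> card D > 0" using fin card_gt_0_iff by blast

lemma seqs_distinct:
  assumes r: "r \<in> D" shows "distinct (seqs r)"
proof -
  let ?n = "card D"
  have n: "?n > 0" using cardpos[OF r] .
  have inj: "inj_on (\<lambda>k. (\<phi> ^^ k) r) {1..<Suc ?n}"
  proof (rule inj_onI)
    fix a b assume a: "a \<in> {1..<Suc ?n}" and b: "b \<in> {1..<Suc ?n}" and e: "(\<phi> ^^ a) r = (\<phi> ^^ b) r"
    have ma: "(\<phi> ^^ (a mod ?n)) r = (\<phi> ^^ a) r" using funpow_mod_eq[OF cycle(1)[OF r]] .
    have mb: "(\<phi> ^^ (b mod ?n)) r = (\<phi> ^^ b) r" using funpow_mod_eq[OF cycle(1)[OF r]] .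
    have "a mod ?n = b mod ?n"
      using inj_onD[OF cycle(2)[OF r], of "a mod ?n" "b mod ?n"] ma mb e n by simp
    moreover have "a mod ?n = (if a = ?n then 0 else a)" using a by auto
    moreover have "b mod ?n = (if b = ?n then 0 else b)" using b by auto
    ultimately show "a = b" using a b by (auto split: if_splits)
  qed
  show ?thesis unfolding seqs_def distinct_map set_upt using inj distinct_upt by blast
qed

lemma seqs_set:
  assumes r: "r \<in> D" shows "set (seqs r) = D"
proof
  show "set (seqs r) \<subseteq> D" unfolding seqs_def using phi_pow_in[OF r] by auto
  show "D \<subseteq> set (seqs r)"
  proof
    fix d assume "d \<in> D"
    then obtain k where k: "k < card D" "d = (\<phi> ^^ k) r" using cycle(3)[OF r] by force
    show "d \<in> set (seqs r)"
    proof (cases "k = 0")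
      case True
      then have "d = (\<phi> ^^ card D) r" using k cycle(1)[OF r] by simp
      then show ?thesis unfolding seqs_def using cardpos[OF r] by auto
    next
      case False
      then show ?thesis unfolding seqs_def using k by auto
    qed
  qed
qed

lemma seqs_snoc:
  assumes r: "r \<in> D" shows "seqs r = map (\<lambda>k. (\<phi> ^^ k) r) [1..<card D] @ [r]"
proof -
  have "[1..<Suc (card D)] = [1..<card D] @ [card D]" using cardpos[OF r] by simp
  then show ?thesis unfolding seqs_def using cycle(1)[OF r] by simp
qed

lemma length_seqs: "length (seqs r) = card D" unfolding seqs_def by simp

lemma seqs_nth: "i < card D \<Longrightarrow> seqs y ! i = (\<phi> ^^ (Suc i)) y"
  unfolding seqs_def by (simp del: upt_Suc)

lemma leaf_seq_props:
  assumes r: "r \<in> D" "\<sigma> r = r"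
  shows "distinct (leaf_seq D \<alpha> \<sigma> r)" "set (leaf_seq D \<alpha> \<sigma> r) = {d \<in> D. \<sigma> d = d}"
    "\<exists>L0. leaf_seq D \<alpha> \<sigma> r = L0 @ [r]"
  using seqs_distinct[OF r(1)] seqs_set[OF r(1)] seqs_snoc[OF r(1)] r(2)
  unfolding leaf_seq_eq by auto

lemma seqs_rot:
  assumes r: "r \<in> D" and m: "m < card D"
  shows "seqs ((\<phi> ^^ m) r) = drop m (seqs r) @ take m (seqs r)"
proof (rule nth_equalityI)
  show "length (seqs ((\<phi> ^^ m) r)) = length (drop m (seqs r) @ take m (seqs r))"
    using m by (simp add: length_seqs)
next
  fix i assume "i < length (seqs ((\<phi> ^^ m) r))"
  then have i: "i < card D" by (simp add: length_seqs)
  have l: "seqs ((\<phi> ^^ m) r) ! i = (\<phi> ^^ (Suc i + m)) r"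
    using seqs_nth[OF i] by (simp only: funpow_add o_apply)
  show "seqs ((\<phi> ^^ m) r) ! i = (drop m (seqs r) @ take m (seqs r)) ! i"
  proof (cases "i < card D - m")
    case True
    then have "(drop m (seqs r) @ take m (seqs r)) ! i = seqs r ! (m + i)"
      using m by (simp add: nth_append length_seqs)
    also have "\<dots> = (\<phi> ^^ (Suc i + m)) r" using True m by (subst seqs_nth) (simp_all add: add.commute)
    finally show ?thesis unfolding l by simp
  next
    case False
    then have "(drop m (seqs r) @ take m (seqs r)) ! i = seqs r ! (i - (card D - m))"
      using m i by (simp add: nth_append length_seqs)
    also have "\<dots> = (\<phi> ^^ (Suc (i - (card D - m)))) r" using False m i by (subst seqs_nth) simp_all
    also have "\<dots> = (\<phi> ^^ (Suc (i - (card D - m)) + card D)) r" using period[OF r] by simp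
    also have "Suc (i - (card D - m)) + card D = Suc i + m" using False m by simp
    finally show ?thesis unfolding l by simp
  qed
qed

lemma rotation:
  assumes r: "r \<in> D" "\<sigma> r = r" and x: "x \<in> D" "\<sigma> x = x" "x \<noteq> r"
  shows "\<exists>A B. leaf_seq D \<alpha> \<sigma> r = A @ B \<and> leaf_seq D \<alpha> \<sigma> x = B @ A \<and> A \<noteq> [] \<and> B \<noteq> [] \<and> last A = x"
proof -
  obtain m where m: "m < card D" "x = (\<phi> ^^ m) r" using cycle(3)[OF r(1)] x(1) by force
  have m0: "m \<noteq> 0" using m x(3) by (metis funpow_0)
  let ?P = "\<lambda>d. \<sigma> d = d"
  define A where "A = filter ?P (take m (seqs r))"
  define B where "B = filter ?P (drop m (seqs r))"
  have 1: "leaf_seq D \<alpha> \<sigma> r = A @ B" unfolding leaf_seq_eq A_def B_def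
    by (metis append_take_drop_id filter_append)
  have 2: "leaf_seq D \<alpha> \<sigma> x = B @ A" unfolding leaf_seq_eq A_def B_def m(2) seqs_rot[OF r(1) m(1)] by simp
  have "take m (seqs r) = map (\<lambda>k. (\<phi> ^^ k) r) [1..<Suc m]"
    unfolding seqs_def using m by (simp add: take_map)
  also have "\<dots> = map (\<lambda>k. (\<phi> ^^ k) r) [1..<m] @ [x]" using m0 m(2) by simp
  finally have "A = filter ?P (map (\<lambda>k. (\<phi> ^^ k) r) [1..<m]) @ [x]" unfolding A_def using x(2) by simp
  then have 3: "A \<noteq> []" "last A = x" by auto
  have "drop m (seqs r) = drop m (map (\<lambda>k. (\<phi> ^^ k) r) [1..<card D]) @ [r]"
    unfolding seqs_snoc[OF r(1)] using m by simp
  then have 4: "B \<noteq> []" unfolding B_def using r(2) by simp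
  show ?thesis using 1 2 3 4 by blast
qed

end


context ptree
begin

lemma orbit_sub: "d \<in> D \<Longrightarrow> orbit \<sigma> d \<subseteq> D" using permutes_orbit_subset[OF sp] .
lemma orbit_self: "d \<in> orbit \<sigma> d" using permutation_self_in_orbit[OF sigma_permutation] .
lemma orbit_same: "x \<in> orbit \<sigma> d \<Longrightarrow> orbit \<sigma> x = orbit \<sigma> d" using orb_eq[OF sigma_permutation] .

lemma orbit_inner:
  assumes "d \<in> D" "\<sigma> d \<noteq> d" "y \<in> orbit \<sigma> d" shows "y \<in> D" "\<sigma> y \<noteq> y"
proof -
  show "y \<in> D" using orbit_sub[OF assms(1)] assms(3) by blast
  show "\<sigma> y \<noteq> y"
  proof
    assume "\<sigma> y = y"
    then have "orbit \<sigma> y = {y}" by (simp add: orbit_eq_singleton_iff)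
    then have "orbit \<sigma> d = {y}" using orbit_same[OF assms(3)] by simp
    then have "d = y" using orbit_self[of d] by simp
    then show False using assms(2) \<open>\<sigma> y = y\<close> by simp
  qed
qed

lemma count_leaves:
  fixes col :: "'a \<Rightarrow> colour"
  assumes eul: "\<forall>d\<in>D. \<sigma> d \<noteq> d \<longrightarrow> even (card (orbit_of \<sigma> d)) \<and>
        card {l \<in> D. \<sigma> l = l \<and> col l = White \<and> \<alpha> l \<in> orbit_of \<sigma> d} = card (orbit_of \<sigma> d) div 2 - 1"
    and nb: "\<forall>l\<in>D. \<sigma> l = l \<longrightarrow> \<sigma> (\<alpha> l) \<noteq> \<alpha> l"
  shows "card {l\<in>D. \<sigma> l = l} = 2 * card {l\<in>D. \<sigma> l = l \<and> col l = White} + 2"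
proof -
  define Lv where "Lv = {d\<in>D. \<sigma> d = d}"
  define In where "In = {d\<in>D. \<sigma> d \<noteq> d}"
  define Vin where "Vin = {orbit \<sigma> d | d. d \<in> In}"
  define W where "W = {l\<in>D. \<sigma> l = l \<and> col l = White}"
  define Wv where "Wv = (\<lambda>v. {l\<in>D. \<sigma> l = l \<and> col l = White \<and> \<alpha> l \<in> v})"
  have oo: "\<And>d. orbit_of \<sigma> d = orbit \<sigma> d" using orbit_of_perm[OF sigma_permutation] .
  have finVin: "finite Vin"
  proof -
    have "Vin \<subseteq> Pow D" unfolding Vin_def In_def using orbit_sub by auto
    then show ?thesis using fin by (meson finite_Pow_iff finite_subset)
  qed
  have finLv: "finite Lv" "finite In" unfolding Lv_def In_def using fin by auto
  have V: "map_vertices D \<sigma> = (\<lambda>l. {l}) ` Lv \<union> Vin"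
  proof -
    have "\<And>d. d \<in> D \<Longrightarrow> \<sigma> d = d \<Longrightarrow> orbit \<sigma> d = {d}" by (simp add: orbit_eq_singleton_iff)
    then show ?thesis unfolding map_vertices_def oo Lv_def Vin_def In_def by auto
  qed
  have disj: "(\<lambda>l. {l}) ` Lv \<inter> Vin = {}"
  proof (rule ccontr)
    assume "(\<lambda>l. {l}) ` Lv \<inter> Vin \<noteq> {}"
    then obtain l d where "l \<in> Lv" "d \<in> In" "{l} = orbit \<sigma> d" unfolding Vin_def by auto
    then show False using orbit_self[of d] unfolding Lv_def In_def by auto
  qed
  have cardV: "card (map_vertices D \<sigma>) = card Lv + card Vin"
    unfolding V using card_Un_disjoint[OF _ finVin disj] finLv card_image[of "\<lambda>l. {l}" Lv]
    by (simp add: inj_on_def)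
  have cardE: "2 * card (map_edges D \<alpha>) = card D"
  proof -
    have U: "\<Union>(map_edges D \<alpha>) = D" unfolding map_edges_def using alpha_in by auto
    have fE: "finite (map_edges D \<alpha>)" unfolding map_edges_def using fin by simp
    have c2: "\<forall>c\<in>map_edges D \<alpha>. card c = 2" unfolding map_edges_def using nfix by (auto simp: card_2_iff)
    have dj: "\<forall>c1\<in>map_edges D \<alpha>. \<forall>c2\<in>map_edges D \<alpha>. c1 \<noteq> c2 \<longrightarrow> c1 \<inter> c2 = {}"
      unfolding map_edges_def using inv by (auto, metis, metis)
    have "2 * card (map_edges D \<alpha>) = card (\<Union>(map_edges D \<alpha>))"
      by (rule card_partition) (use fE U fin c2 dj in auto)
    then show ?thesis using U by simp
  qed
  have UVin: "\<Union>Vin = In"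
  proof
    show "\<Union>Vin \<subseteq> In" unfolding Vin_def In_def using orbit_inner by blast
    show "In \<subseteq> \<Union>Vin" unfolding Vin_def using orbit_self by blast
  qed
  have pdV: "\<forall>X\<in>Vin. \<forall>Y\<in>Vin. X \<noteq> Y \<longrightarrow> X \<inter> Y = {}"
  proof (intro ballI impI)
    fix X Y assume "X \<in> Vin" "Y \<in> Vin" "X \<noteq> Y"
    then obtain d e where "X = orbit \<sigma> d" "Y = orbit \<sigma> e" unfolding Vin_def by auto
    then show "X \<inter> Y = {}" using orbit_same \<open>X \<noteq> Y\<close> by blast
  qed
  have finv: "\<And>v. v \<in> Vin \<Longrightarrow> finite v"
    unfolding Vin_def In_def using orbit_sub fin finite_subset by blast
  have sumIn: "card In = (\<Sum>v\<in>Vin. card v)"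
  proof -
    have "card (\<Union>Vin) = (\<Sum>v\<in>Vin. card v)"
      using card_UN_disjoint[OF finVin, of "\<lambda>x. x"] finv pdV by simp
    then show ?thesis using UVin by simp
  qed
  have UW: "\<Union>(Wv ` Vin) = W"
  proof
    show "\<Union>(Wv ` Vin) \<subseteq> W" unfolding Wv_def W_def by auto
    show "W \<subseteq> \<Union>(Wv ` Vin)"
    proof
      fix l assume "l \<in> W"
      then have l: "l \<in> D" "\<sigma> l = l" "col l = White" unfolding W_def by auto
      have "\<alpha> l \<in> In" using nb l alpha_in unfolding In_def by auto
      then have "orbit \<sigma> (\<alpha> l) \<in> Vin" unfolding Vin_def by auto
      moreover have "l \<in> Wv (orbit \<sigma> (\<alpha> l))" unfolding Wv_def using l orbit_self by auto
      ultimately show "l \<in> \<Union>(Wv ` Vin)" by blast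
    qed
  qed
  have sumW: "card W = (\<Sum>v\<in>Vin. card (Wv v))"
  proof -
    have "\<forall>i\<in>Vin. \<forall>j\<in>Vin. i \<noteq> j \<longrightarrow> Wv i \<inter> Wv j = {}"
      using pdV unfolding Wv_def by blast
    moreover have "\<forall>i\<in>Vin. finite (Wv i)" unfolding Wv_def using fin by auto
    ultimately show ?thesis using card_UN_disjoint[OF finVin, of Wv] UW by simp
  qed
  have cv: "\<And>v. v \<in> Vin \<Longrightarrow> card v = 2 * card (Wv v) + 2"
  proof -
    fix v assume "v \<in> Vin"
    then obtain d where d: "d \<in> D" "\<sigma> d \<noteq> d" "v = orbit \<sigma> d" unfolding Vin_def In_def by auto
    have e: "even (card v)" "card (Wv v) = card v div 2 - 1"
      using eul d unfolding oo Wv_def by auto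
    have "{d, \<sigma> d} \<subseteq> v" using d orbit_self orbit.base by auto
    then have "card {d, \<sigma> d} \<le> card v" using finv[OF \<open>v \<in> Vin\<close>] card_mono by blast
    then have "card v \<ge> 2" using d by simp
    then show "card v = 2 * card (Wv v) + 2" using e by auto
  qed
  have "card In = (\<Sum>v\<in>Vin. 2 * card (Wv v) + 2)"
    unfolding sumIn using cv by (rule sum.cong[OF refl])
  also have "\<dots> = 2 * card W + 2 * card Vin"
    unfolding sumW sum.distrib sum_distrib_left by simp
  finally have "card In = 2 * card W + 2 * card Vin" .
  moreover have "card D = card Lv + card In"
  proof -
    have "D = Lv \<union> In" "Lv \<inter> In = {}" unfolding Lv_def In_def by auto
    then show ?thesis using card_Un_disjoint finLv by metis
  qed
  moreover have "card (map_faces D \<alpha> \<sigma>) = 1" by (rule faces1)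
  ultimately show ?thesis using euler cardV cardE unfolding Lv_def[symmetric] W_def[symmetric] by linarith
qed

end


lemma count_distinct:
  "distinct L \<Longrightarrow> count_list (map col L) c = card {x \<in> set L. col x = c}"
proof -
  assume d: "distinct L"
  have "count_list (map col L) c = length (filter (\<lambda>x. col x = c) L)"
    by (simp add: count_list_eq_length_filter filter_map o_def eq_commute)
  also have "\<dots> = card (set (filter (\<lambda>x. col x = c) L))"
    by (rule distinct_card[symmetric]) (simp add: d)
  finally show ?thesis by (simp only: set_filter)
qed

lemma count_total: "count_list v Black + count_list v White = length v"
proof (induct v)
  case (Cons a v) then show ?case by (cases a) auto
qed simp

lemma match_char:
  assumes L: "L = A @ B" and ca: "map col A = x @ [Black]" and cb: "map col B = y @ [Black]"
    and cx: "correct_word x" "H x = 0" and cy: "correct_word y" "H y = 0"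
  shows "(\<exists>i j. brackets_matched (map col L) i j \<and> L ! i = l \<and> L ! j = l') \<longleftrightarrow>
     (\<exists>i j. brackets_matched x i j \<and> A ! i = l \<and> A ! j = l') \<or>
     (\<exists>i j. brackets_matched y i j \<and> B ! i = l \<and> B ! j = l')"
proof -
  have u: "map col L = x @ [Black] @ y @ [Black]" using L ca cb by simp
  have lA: "length A = Suc (length x)" using arg_cong[OF ca, of length] by simp
  note S = bm_split[OF cx cy]
  show ?thesis
  proof
    assume "\<exists>i j. brackets_matched (map col L) i j \<and> L ! i = l \<and> L ! j = l'"
    then obtain i j where m: "brackets_matched (x @ [Black] @ y @ [Black]) i j" "L ! i = l" "L ! j = l'"
      using u by auto
    from m(1) S consider "brackets_matched x i j"
      | i' j' where "i = Suc (length x) + i'" "j = Suc (length x) + j'" "brackets_matched y i' j'" by blast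
    then show "(\<exists>i j. brackets_matched x i j \<and> A ! i = l \<and> A ! j = l') \<or>
     (\<exists>i j. brackets_matched y i j \<and> B ! i = l \<and> B ! j = l')"
    proof cases
      case 1
      then have "i < length A" "j < length A" using bm_range[OF 1] lA by auto
      then show ?thesis using 1 m L by (auto simp: nth_append)
    next
      case (2 i' j')
      then show ?thesis using m L lA by (auto simp: nth_append)
    qed
  next
    assume "(\<exists>i j. brackets_matched x i j \<and> A ! i = l \<and> A ! j = l') \<or>
     (\<exists>i j. brackets_matched y i j \<and> B ! i = l \<and> B ! j = l')"
    then show "\<exists>i j. brackets_matched (map col L) i j \<and> L ! i = l \<and> L ! j = l'"
    proof
      assume "\<exists>i j. brackets_matched x i j \<and> A ! i = l \<and> A ! j = l'"
      then obtain i j where m: "brackets_matched x i j" "A ! i = l" "A ! j = l'" by blast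
      then have "i < length A" "j < length A" using bm_range[OF m(1)] lA by auto
      then show ?thesis using m S u L by (auto simp: nth_append)
    next
      assume "\<exists>i j. brackets_matched y i j \<and> B ! i = l \<and> B ! j = l'"
      then obtain i j where m: "brackets_matched y i j" "B ! i = l" "B ! j = l'" by blast
      have "brackets_matched (map col L) (Suc (length x) + i) (Suc (length x) + j)"
        unfolding u using S[of "Suc (length x) + i" "Suc (length x) + j"] m by blast
      moreover have "L ! (Suc (length x) + i) = l" "L ! (Suc (length x) + j) = l'"
        using m L lA by (auto simp: nth_append)
      ultimately show ?thesis by blast
    qed
  qed
qed

lemma bm_not_last:
  assumes cx: "correct_word x" "H x = 0" and cy: "correct_word y" "H y = 0"
    and m: "brackets_matched (x @ [Black] @ y @ [Black]) i j"
  shows "i < Suc (length x + length y)" "j < Suc (length x + length y)"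
proof -
  from m bm_split[OF cx cy] have "j < Suc (length x + length y)"
    using bm_range by fastforce
  then show "j < Suc (length x + length y)" "i < Suc (length x + length y)"
    using bm_range[OF m] by auto
qed

context ptree
begin

lemma two_leaf:
  assumes "l \<in> D" "\<sigma> l = l" "\<sigma> (\<alpha> l) = \<alpha> l"
  shows "D = {l, \<alpha> l}"
proof -
  have 1: "\<phi> l = \<alpha> l" "\<phi> (\<alpha> l) = l" unfolding \<phi>_def using assms inv by auto
  then have "(\<phi> ^^ 2) l = l" by (simp add: numeral_2_eq_2)
  then have "orbit \<phi> l = {(\<phi> ^^ m) l | m. m < 2}" by (rule orbit_altdef_bounded) simp
  also have "\<dots> = {l, \<alpha> l}"
  proof
    show "{(\<phi> ^^ m) l | m. m < 2} \<subseteq> {l, \<alpha> l}" using 1 by (auto simp: less_2_cases_iff)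
    have "l \<in> {(\<phi> ^^ m) l | m. m < 2}" by (rule CollectI, rule exI[of _ 0]) simp
    moreover have "\<alpha> l \<in> {(\<phi> ^^ m) l | m. m < 2}" using 1 by (rule_tac CollectI, rule_tac exI[of _ 1]) simp
    ultimately show "{l, \<alpha> l} \<subseteq> {(\<phi> ^^ m) l | m. m < 2}" by blast
  qed
  finally show ?thesis using face_orbit[OF assms(1)] by simp
qed

end


theorem mainTheorem4:
  fixes D :: "'a set" and \<alpha> \<sigma> :: "'a \<Rightarrow> 'a" and col :: "'a \<Rightarrow> colour" and r r' :: 'a
  assumes "balanced_tree D \<alpha> \<sigma> col r"
      and "balanced_tree D \<alpha> \<sigma> col r'"
      and "r' \<noteq> r"
  shows "eul_closure D \<alpha> \<sigma> col r' = reverse_root (eul_closure D \<alpha> \<sigma> col r)"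
proof -
  have eT: "eulerian_tree D \<alpha> \<sigma> col r" using assms(1) unfolding balanced_tree_def by blast
  have pt: "plane_tree D \<alpha> \<sigma>" using eT unfolding eulerian_tree_def by blast
  interpret ptree D \<alpha> \<sigma> by unfold_locales (rule pt)
  have r: "r \<in> D" "\<sigma> r = r" "col r = Black" using eT unfolding eulerian_tree_def by auto
  have eul: "\<forall>d\<in>D. \<sigma> d \<noteq> d \<longrightarrow> even (card (orbit_of \<sigma> d)) \<and>
        card {l \<in> D. \<sigma> l = l \<and> col l = White \<and> \<alpha> l \<in> orbit_of \<sigma> d} = card (orbit_of \<sigma> d) div 2 - 1"
    using eT unfolding eulerian_tree_def by blast
  have balD: "\<And>x. balanced_tree D \<alpha> \<sigma> col x \<Longrightarrow> x \<in> D \<and> \<sigma> x = x"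
    unfolding balanced_tree_def eulerian_tree_def by blast
  have r': "r' \<in> D" "\<sigma> r' = r'" using balD[OF assms(2)] by auto
  show ?thesis
  proof (cases "\<sigma> (\<alpha> r) = \<alpha> r")
    case True
    have DD: "D = {r, \<alpha> r}" by (rule two_leaf[OF r(1,2) True])
    have r'a: "r' = \<alpha> r" using r' DD assms(3) by auto
    have allleaf: "\<forall>d\<in>D. \<sigma> d = d" using DD r True by auto
    have cf: "\<And>d P. (d \<in> D \<and> \<sigma> d \<noteq> d \<and> P) = False" using allleaf by auto
    show ?thesis unfolding eul_closure_def reverse_root_def using r'a inv[OF r(1)] by (simp add: cf)
  next
    case False
    have nb: "\<forall>l\<in>D. \<sigma> l = l \<longrightarrow> \<sigma> (\<alpha> l) \<noteq> \<alpha> l"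
    proof (intro ballI impI notI)
      fix l assume l: "l \<in> D" "\<sigma> l = l" "\<sigma> (\<alpha> l) = \<alpha> l"
      then have "D = {l, \<alpha> l}" by (rule two_leaf)
      then have "r = l \<or> r = \<alpha> l" using r(1) by auto
      then show False using False l inv[OF l(1)] by auto
    qed
    have cnt: "card {l\<in>D. \<sigma> l = l} = 2 * card {l\<in>D. \<sigma> l = l \<and> col l = White} + 2"
      by (rule count_leaves[OF eul nb])
    define L where "L = leaf_seq D \<alpha> \<sigma> r"
    have Lp: "distinct L" "set L = {d \<in> D. \<sigma> d = d}" "\<exists>L0. L = L0 @ [r]"
      using leaf_seq_props[OF r(1,2)] unfolding L_def by auto
    have cW: "count_list (map col L) White = card {l\<in>D. \<sigma> l = l \<and> col l = White}"
    proof -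
      have "{x \<in> set L. col x = White} = {l\<in>D. \<sigma> l = l \<and> col l = White}" using Lp(2) by auto
      then show ?thesis using count_distinct[OF Lp(1), of col White] by simp
    qed
    have cT: "count_list (map col L) Black + count_list (map col L) White = card {l\<in>D. \<sigma> l = l}"
      using count_total[of "map col L"] distinct_card[OF Lp(1)] Lp(2) by simp
    have hL: "H (map col L) = -2" unfolding H_def using cW cT cnt by linarith
    obtain p1 p2 where p: "correct_word p1" "correct_word p2" "map col L = p1 @ [Black] @ p2 @ [Black]"
      using assms(1) unfolding balanced_tree_def tree_word_def L_def by blast
    have hp: "H p1 = 0" "H p2 = 0" using dyck_of[OF p(1,2)] hL p(3) by metis+
    have uniq: "x = L ! length p1 \<and> (\<exists>A B. L = A @ B \<and> leaf_seq D \<alpha> \<sigma> x = B @ A \<and>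
        map col A = p1 @ [Black] \<and> map col B = p2 @ [Black])"
      if bx: "balanced_tree D \<alpha> \<sigma> col x" and xr: "x \<noteq> r" for x
    proof -
      have x: "x \<in> D" "\<sigma> x = x" using balD[OF bx] by auto
      obtain A B where AB: "L = A @ B" "leaf_seq D \<alpha> \<sigma> x = B @ A" "A \<noteq> []" "B \<noteq> []" "last A = x"
        using rotation[OF r(1,2) x xr] unfolding L_def by blast
      obtain q1 q2 where q: "correct_word q1" "correct_word q2"
        "map col (leaf_seq D \<alpha> \<sigma> x) = q1 @ [Black] @ q2 @ [Black]"
        using bx unfolding balanced_tree_def tree_word_def by blast
      have ab: "map col A @ map col B = p1 @ [Black] @ p2 @ [Black]" using p(3) AB(1) by simp
      have ba: "map col B @ map col A = q1 @ [Black] @ q2 @ [Black]" using q(3) AB(2) by simp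
      have hab: "H (map col A @ map col B) = -2" using hL AB(1) by simp
      have lenA: "length (map col A) = Suc (length p1)"
        by (rule rot_pos[OF ab ba p(1,2) q(1,2) hab]) (use AB in auto)
      have cA: "map col A = p1 @ [Black]"
        using arg_cong[OF ab, of "take (Suc (length p1))"] lenA by simp
      have cB: "map col B = p2 @ [Black]"
        using arg_cong[OF ab, of "drop (Suc (length p1))"] lenA by simp
      have "x = A ! length p1" using AB(3,5) lenA by (simp add: last_conv_nth)
      also have "\<dots> = L ! length p1" using AB(1) lenA by (simp add: nth_append)
      finally show ?thesis using AB(1,2) cA cB by blast
    qed
    obtain A B where AB: "L = A @ B" "leaf_seq D \<alpha> \<sigma> r' = B @ A"
      "map col A = p1 @ [Black]" "map col B = p2 @ [Black]"
      using uniq[OF assms(2,3)] by blast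
    have r'L: "r' = L ! length p1" using uniq[OF assms(2,3)] by blast
    have lm: "leaves_matched D \<alpha> \<sigma> col r = leaves_matched D \<alpha> \<sigma> col r'"
    proof (intro ext)
      fix l l'
      have 1: "leaves_matched D \<alpha> \<sigma> col r l l' \<longleftrightarrow>
         (\<exists>i j. brackets_matched p1 i j \<and> A ! i = l \<and> A ! j = l') \<or>
         (\<exists>i j. brackets_matched p2 i j \<and> B ! i = l \<and> B ! j = l')"
        unfolding leaves_matched_def Let_def L_def[symmetric]
        by (rule match_char[OF AB(1,3,4) p(1) hp(1) p(2) hp(2)])
      have 2: "leaves_matched D \<alpha> \<sigma> col r' l l' \<longleftrightarrow>
         (\<exists>i j. brackets_matched p2 i j \<and> B ! i = l \<and> B ! j = l') \<or>
         (\<exists>i j. brackets_matched p1 i j \<and> A ! i = l \<and> A ! j = l')"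
        unfolding leaves_matched_def Let_def
        by (rule match_char[OF AB(2,4,3) p(2) hp(2) p(1) hp(1)])
      show "leaves_matched D \<alpha> \<sigma> col r l l' = leaves_matched D \<alpha> \<sigma> col r' l l'"
        using 1 2 by blast
    qed
    have cm: "closure_mate D \<alpha> \<sigma> col r' = closure_mate D \<alpha> \<sigma> col r"
      unfolding closure_mate_def lm ..
    have lenL: "length L = Suc (Suc (length p1 + length p2))" using arg_cong[OF p(3), of length] by simp
    obtain L0 where L0: "L = L0 @ [r]" using Lp(3) by blast
    have lastr: "L ! (Suc (length p1 + length p2)) = r" using L0 lenL by (simp add: nth_append)
    have notlast: "i = Suc (length p1 + length p2)" if "i < length L" "L ! i = r" for i
      using nth_eq_iff_index_eq[OF Lp(1) that(1), of "Suc (length p1 + length p2)"] lastr that lenL by simp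
    have unm: "\<not> (\<exists>l'. leaves_matched D \<alpha> \<sigma> col r r l' \<or> leaves_matched D \<alpha> \<sigma> col r l' r)"
    proof
      assume "\<exists>l'. leaves_matched D \<alpha> \<sigma> col r r l' \<or> leaves_matched D \<alpha> \<sigma> col r l' r"
      then obtain i j where m: "brackets_matched (map col L) i j" "L ! i = r \<or> L ! j = r"
        unfolding leaves_matched_def Let_def L_def[symmetric] by blast
      have m2: "brackets_matched (p1 @ [Black] @ p2 @ [Black]) i j" using m(1) p(3) by simp
      have ij: "i < Suc (length p1 + length p2)" "j < Suc (length p1 + length p2)"
        using bm_not_last[OF p(1) hp(1) p(2) hp(2) m2] by auto
      from m(2) show False
      proof
        assume "L ! i = r"
        moreover have "i < length L" using ij lenL by simp
        ultimately have "i = Suc (length p1 + length p2)" using notlast by blast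
        then show False using ij by simp
      next
        assume "L ! j = r"
        moreover have "j < length L" using ij lenL by simp
        ultimately have "j = Suc (length p1 + length p2)" using notlast by blast
        then show False using ij by simp
      qed
    qed
    have "closure_mate D \<alpha> \<sigma> col r r = (THE l'. l' \<noteq> r \<and> balanced_tree D \<alpha> \<sigma> col l')"
      unfolding closure_mate_def using unm by simp
    also have "\<dots> = r'"
    proof (rule the_equality)
      show "r' \<noteq> r \<and> balanced_tree D \<alpha> \<sigma> col r'" using assms(2,3) by blast
      fix y assume "y \<noteq> r \<and> balanced_tree D \<alpha> \<sigma> col y"
      then show "y = r'" using uniq r'L by blast
    qed
    finally have cmr: "closure_mate D \<alpha> \<sigma> col r r = r'" .
    have cond: "\<alpha> r \<in> D \<and> \<sigma> (\<alpha> r) \<noteq> \<alpha> r \<and> \<sigma> (\<alpha> (\<alpha> r)) = \<alpha> (\<alpha> r)"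
      using alpha_in[OF r(1)] False inv[OF r(1)] r(2) by simp
    show ?thesis unfolding eul_closure_def reverse_root_def cm using cond cmr inv[OF r(1)] by simp
  qed
qed

end
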